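(* Let $A\in\mathbb{R}^{n\times n}$ be Metzler, $J\in\mathbb{R}^{n\times n}$ be nonnegative and $0<T_{min}\le T_{max}<\infty$. The following statements are equivalent: (a) There exist $\lambda,\mu\in\mathbb{R}^n_{>0}$ such that, with $V(x)=\lambda^\top x$, $V(e^{A\theta}Jx)-V(x)\le-\mu^\top x$ for all $x\in\mathbb{R}^n_{\ge0}$ and all $\theta\in[T_{min},T_{max}]$ (i.e. $V(x(t_{k+1}))-V(x(t_k))\le-\mu^\top x(t_k)$ along trajectories with $T_k\in[T_{min},T_{max}]$). (b) There exists $\lambda\in\mathbb{R}^n_{>0}$ such that $\lambda^\top(e^{A\theta}J-I_n)<0$ for all $\theta\in[T_{min},T_{max}]$. (c) There exist a differentiable $\zeta:[0,T_{max}]\to\mathbb{R}^n$ with $\zeta(0)\in\mathbb{R}^n_{>0}$ and $\varepsilon>0$ such that $\zeta(\tau)^\top A-\dot\zeta(\tau)^\top\le0$ for all $\tau\in[0,T_{max}]$ and $\zeta(\theta)^\top J-\zeta(0)^\top+\varepsilon\mathbf{1}_n^\top\le0$ for all $\theta\in[T_{min},T_{max}]$.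
   Context: Consider the linear impulsive system $\dot x(t)=Ax(t)$ for $t\neq t_k$, $x(t_k^+)=Jx(t_k)$, $x(t_0)=x_0$, where $x(t)\in\mathbb{R}^n$, $x(t^+):=\lim_{s\downarrow t}x(s)$ (left-continuous trajectories), and the impulse times are strictly increasing with $t_k\to\infty$; $T_k:=t_{k+1}-t_k$. A matrix is Metzler if its off-diagonal entries are nonnegative and nonnegative if all entries are nonnegative. Vector inequalities are componentwise; $\mathbf{1}_n$ is the vector of ones. *)

theory Defs
  imports "HOL-Analysis.Analysis"
begin

definition mat_pow :: "real ^'n^'n \<Rightarrow> nat \<Rightarrow> real ^'n^'n" where
  "mat_pow A k = (((**) A) ^^ k) (mat 1)"

definition mat_exp :: "real ^'n^'n \<Rightarrow> real ^'n^'n" where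
  "mat_exp A = (\<Sum>k. (1 / fact k) *\<^sub>R mat_pow A k)"

definition metzler :: "real ^'n^'n \<Rightarrow> bool" where
  "metzler A \<longleftrightarrow> (\<forall>i j. i \<noteq> j \<longrightarrow> A $ i $ j \<ge> 0)"

definition nonneg_mat :: "real ^'n^'n \<Rightarrow> bool" where
  "nonneg_mat A \<longleftrightarrow> (\<forall>i j. A $ i $ j \<ge> 0)"

definition pos_vec :: "real ^'n \<Rightarrow> bool" where
  "pos_vec v \<longleftrightarrow> (\<forall>i. v $ i > 0)"

definition nonneg_vec :: "real ^'n \<Rightarrow> bool" where
  "nonneg_vec v \<longleftrightarrow> (\<forall>i. v $ i \<ge> 0)"

end

theory Submission
  imports Defs
begin


typedef ('n::finite) sqm = "UNIV :: (real^'n^'n) set" morphisms rep abs_sqm by auto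

setup_lifting type_definition_sqm

lemma matrix_add_rdistrib': "((B + C) ** A) = (B ** A) + (C ** A)"
  by (vector matrix_matrix_mult_def sum.distrib[symmetric] field_simps)

instantiation sqm :: (finite) real_normed_algebra_1
begin
lift_definition zero_sqm :: "'a sqm" is 0 .
lift_definition one_sqm :: "'a sqm" is "mat 1" .
lift_definition plus_sqm :: "'a sqm \<Rightarrow> 'a sqm \<Rightarrow> 'a sqm" is "(+)" .
lift_definition minus_sqm :: "'a sqm \<Rightarrow> 'a sqm \<Rightarrow> 'a sqm" is "(-)" .
lift_definition uminus_sqm :: "'a sqm \<Rightarrow> 'a sqm" is "uminus" .
lift_definition times_sqm :: "'a sqm \<Rightarrow> 'a sqm \<Rightarrow> 'a sqm" is "(**)" .
lift_definition scaleR_sqm :: "real \<Rightarrow> 'a sqm \<Rightarrow> 'a sqm" is "scaleR" .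
lift_definition norm_sqm :: "'a sqm \<Rightarrow> real" is "\<lambda>M. onorm ((*v) M)" .
definition dist_sqm :: "'a sqm \<Rightarrow> 'a sqm \<Rightarrow> real" where "dist_sqm a b = norm (a - b)"
definition sgn_sqm :: "'a sqm \<Rightarrow> 'a sqm" where "sgn_sqm x = scaleR (inverse (norm x)) x"
definition uniformity_sqm :: "('a sqm \<times> 'a sqm) filter" where
  "uniformity_sqm = (INF e\<in>{0 <..}. principal {(x, y). dist x y < e})"
definition open_sqm :: "'a sqm set \<Rightarrow> bool"
  where "open_sqm S = (\<forall>x\<in>S. \<forall>\<^sub>F (x', y) in uniformity. x' = x \<longrightarrow> y \<in> S)"

lemma mv_bl: "bounded_linear ((*v) (M::real^'a^'a))" by simp

instance
proof
  fix a b c :: "'a sqm" and r s :: real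
  show "a * b * c = a * (b * c)" by transfer (simp add: matrix_mul_assoc)
  show "1 * a = a" by transfer simp
  show "a * 1 = a" by transfer simp
  show "(a + b) * c = a * c + b * c" by transfer (simp add: matrix_add_rdistrib')
  show "a * (b + c) = a * b + a * c" by transfer (simp add: matrix_add_ldistrib)
  show "(0::'a sqm) \<noteq> 1" apply transfer apply (simp add: vec_eq_iff mat_def) done
  show "a + b + c = a + (b + c)" by transfer simp
  show "a + b = b + a" by transfer simp
  show "0 + a = a" by transfer simp
  show "- a + a = 0" by transfer simp
  show "a - b = a + - b" by transfer simp
  show "r *\<^sub>R (a + b) = r *\<^sub>R a + r *\<^sub>R b" by transfer (simp add: scaleR_right_distrib)
  show "(r + s) *\<^sub>R a = r *\<^sub>R a + s *\<^sub>R a" by transfer (simp add: scaleR_left_distrib)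
  show "r *\<^sub>R s *\<^sub>R a = (r * s) *\<^sub>R a" by transfer simp
  show "1 *\<^sub>R a = a" by transfer simp
  show "r *\<^sub>R a * b = r *\<^sub>R (a * b)" by transfer (simp add: scalar_matrix_assoc)
  show "a * r *\<^sub>R b = r *\<^sub>R (a * b)" by transfer (simp add: matrix_scalar_ac scalar_matrix_assoc)
  show "sgn a = inverse (norm a) *\<^sub>R a" by (simp add: sgn_sqm_def)
  show "dist a b = norm (a - b)" by (simp add: dist_sqm_def)
  show "(uniformity :: ('a sqm \<times> 'a sqm) filter) = (INF e\<in>{0 <..}. principal {(x, y). dist x y < e})"
    by (simp add: uniformity_sqm_def)
  show "\<And>U::'a sqm set. open U = (\<forall>x\<in>U. \<forall>\<^sub>F (x', y) in uniformity. x' = x \<longrightarrow> y \<in> U)"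
    by (simp add: open_sqm_def)
  show "(norm a = 0) = (a = 0)"
    apply transfer
    apply (simp add: onorm_eq_0 fun_eq_iff)
    using matrix_eq[where B="0::real^'a^'a"] by auto
  show "norm (a + b) \<le> norm a + norm b"
    apply transfer
    subgoal for a b
    proof -
      have "(*v) (a+b) = (\<lambda>x. a *v x + b *v x)" by (simp add: fun_eq_iff matrix_vector_mult_add_rdistrib)
      then show ?thesis using onorm_triangle[OF mv_bl mv_bl, of a b] by simp
    qed done
  show "norm (r *\<^sub>R a) = \<bar>r\<bar> * norm a"
    apply transfer
    subgoal for r a
    proof -
      have "(*v) (r *\<^sub>R a) = (\<lambda>x. r *\<^sub>R (a *v x))" by (simp add: fun_eq_iff scaleR_matrix_vector_assoc)
      then show ?thesis using onorm_scaleR[OF mv_bl, of r a] by simp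
    qed done
  show "norm (a * b) \<le> norm a * norm b"
    apply transfer
    subgoal for a b
    proof -
      have "(*v) (a ** b) = (*v) a o (*v) b" by (simp add: fun_eq_iff matrix_vector_mul_assoc)
      then show ?thesis using onorm_compose[OF mv_bl mv_bl, of a b] by (simp add: mult.commute)
    qed done
  show "norm (1::'a sqm) = 1"
    apply transfer
    proof -
      have "(*v) (mat 1::real^'a^'a) = (\<lambda>x. x)" by (simp add: fun_eq_iff)
      then show "onorm ((*v) (mat 1::real^'a^'a)) = 1" using onorm_id by simp
    qed
qed
end

lemma norm_mat_le_sum: "norm (M::real^'a::finite^'a) \<le> (\<Sum>i\<in>UNIV. \<Sum>j\<in>UNIV. \<bar>M$i$j\<bar>)"
proof -
  have "norm M \<le> (\<Sum>i\<in>UNIV. norm (M$i))"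
    unfolding norm_vec_def by (rule L2_set_le_sum) auto
  also have "\<dots> \<le> (\<Sum>i\<in>UNIV. \<Sum>j\<in>UNIV. \<bar>M$i$j\<bar>)"
    by (rule sum_mono) (rule norm_le_l1_cart)
  finally show ?thesis .
qed

lemma norm_rep_le: "norm (rep (x::'a::finite sqm)) \<le> norm x * (real CARD('a) * real CARD('a))"
proof -
  have "norm (rep x) \<le> (\<Sum>i\<in>(UNIV::'a set). \<Sum>j\<in>(UNIV::'a set). norm x)"
  proof -
    have "\<And>i j. \<bar>rep x $ i $ j\<bar> \<le> norm x"
      by (simp add: norm_sqm.rep_eq matrix_component_le_onorm)
    then have "(\<Sum>i\<in>UNIV. \<Sum>j\<in>UNIV. \<bar>rep x$i$j\<bar>) \<le> (\<Sum>i\<in>(UNIV::'a set). \<Sum>j\<in>(UNIV::'a set). norm x)"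
      by (intro sum_mono) auto
    then show ?thesis using norm_mat_le_sum[of "rep x"] by linarith
  qed
  then show ?thesis by (simp add: algebra_simps)
qed

lemma norm_abs_le: "norm (abs_sqm (M::real^'a::finite^'a)) \<le> norm M * (real CARD('a) * real CARD('a))"
proof -
  have "norm (abs_sqm M) \<le> (\<Sum>i\<in>(UNIV::'a set). \<Sum>j\<in>(UNIV::'a set). \<bar>M$i$j\<bar>)"
    by (simp add: norm_sqm.rep_eq abs_sqm_inverse onorm_le_matrix_component_sum)
  also have "\<dots> \<le> (\<Sum>i\<in>(UNIV::'a set). \<Sum>j\<in>(UNIV::'a set). norm M)"
    by (intro sum_mono) (rule order_trans[OF component_le_norm_cart Finite_Cartesian_Product.norm_nth_le])
  finally show ?thesis by (simp add: algebra_simps)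
qed

lemma bl_rep: "bounded_linear (rep :: 'a::finite sqm \<Rightarrow> _)"
  by (rule bounded_linear_intro[OF _ _ norm_rep_le]) (simp_all add: plus_sqm.rep_eq scaleR_sqm.rep_eq)

lemma bl_abs: "bounded_linear (abs_sqm :: _ \<Rightarrow> 'a::finite sqm)"
  by (rule bounded_linear_intro[OF _ _ norm_abs_le])
     (simp_all add: plus_sqm.abs_eq scaleR_sqm.abs_eq)

instance sqm :: (finite) banach
proof
  fix X :: "nat \<Rightarrow> 'a sqm"
  assume "Cauchy X"
  then have "Cauchy (\<lambda>n. rep (X n))" by (rule bounded_linear.Cauchy[OF bl_rep])
  then obtain L where L: "(\<lambda>n. rep (X n)) \<longlonglongrightarrow> L" using Cauchy_convergent_iff convergent_def by blast
  have "(\<lambda>n. abs_sqm (rep (X n))) \<longlonglongrightarrow> abs_sqm L" by (rule bounded_linear.tendsto[OF bl_abs L])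
  then show "convergent X" by (auto simp: rep_inverse convergent_def)
qed



lemma rep_power: "rep (x ^ k) = mat_pow (rep x) k"
  by (induction k) (simp_all add: mat_pow_def one_sqm.rep_eq times_sqm.rep_eq)

lemma mat_exp_sums: "(\<lambda>k. (1 / fact k) *\<^sub>R mat_pow M k) sums rep (exp (abs_sqm M))"
proof -
  have "(\<lambda>n. rep ((abs_sqm M)^n /\<^sub>R fact n)) sums rep (exp (abs_sqm M))"
    by (rule bounded_linear.sums[OF bl_rep exp_converges])
  moreover have "rep ((abs_sqm M)^n /\<^sub>R fact n) = (1 / fact n) *\<^sub>R mat_pow M n" for n
    by (simp only: scaleR_sqm.rep_eq rep_power abs_sqm_inverse[OF UNIV_I] inverse_eq_divide)
  ultimately show ?thesis by simp
qed

lemma mat_exp_rep: "mat_exp M = rep (exp (abs_sqm M))"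
  unfolding mat_exp_def using mat_exp_sums sums_unique by metis

lemma mat_exp_sums': "(\<lambda>k. (1 / fact k) *\<^sub>R mat_pow M k) sums mat_exp M"
  using mat_exp_sums mat_exp_rep by metis

lemma mat_exp_zero: "mat_exp (0 *\<^sub>R (A::real^'n::finite^'n)) = mat 1"
proof -
  have "abs_sqm (0::real^'n^'n) = 0" by (simp add: zero_sqm_def)
  then show ?thesis by (simp add: mat_exp_rep one_sqm.rep_eq)
qed

lemma abs_scaleR: "abs_sqm (t *\<^sub>R (A::real^'n::finite^'n)) = t *\<^sub>R abs_sqm A"
  by (simp add: scaleR_sqm.abs_eq)

lemma mat_exp_deriv_right:
  "((\<lambda>t. mat_exp (t *\<^sub>R (A::real^'n::finite^'n))) has_vector_derivative (mat_exp (t *\<^sub>R A) ** A)) (at t within S)"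
proof -
  have "((\<lambda>t. rep (exp (t *\<^sub>R abs_sqm A))) has_vector_derivative rep (exp (t *\<^sub>R abs_sqm A) * abs_sqm A)) (at t within S)"
    by (rule bounded_linear.has_vector_derivative[OF bl_rep exp_scaleR_has_vector_derivative_right])
  then show ?thesis by (simp add: mat_exp_rep abs_scaleR times_sqm.rep_eq abs_sqm_inverse)
qed

lemma mat_exp_deriv_left:
  "((\<lambda>t. mat_exp (t *\<^sub>R (A::real^'n::finite^'n))) has_vector_derivative (A ** mat_exp (t *\<^sub>R A))) (at t within S)"
proof -
  have "((\<lambda>t. rep (exp (t *\<^sub>R abs_sqm A))) has_vector_derivative rep (abs_sqm A * exp (t *\<^sub>R abs_sqm A))) (at t within S)"
    by (rule has_vector_derivative_at_within[OF bounded_linear.has_vector_derivative[OF bl_rep exp_scaleR_has_vector_derivative_left]])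
  then show ?thesis by (simp add: mat_exp_rep abs_scaleR times_sqm.rep_eq abs_sqm_inverse)
qed

lemma nonneg_mat_mult: "nonneg_mat X \<Longrightarrow> nonneg_mat Y \<Longrightarrow> nonneg_mat (X ** Y)"
  unfolding nonneg_mat_def matrix_matrix_mult_def by (auto intro!: sum_nonneg)

lemma nonneg_mat_pow: "nonneg_mat X \<Longrightarrow> nonneg_mat (mat_pow X k)"
proof (induction k)
  case 0 then show ?case by (simp add: mat_pow_def nonneg_mat_def mat_def)
next
  case (Suc k) then show ?case by (simp add: mat_pow_def nonneg_mat_mult)
qed

lemma nonneg_mat_exp: assumes "nonneg_mat (B::real^'n::finite^'n)" shows "nonneg_mat (mat_exp B)"
proof -
  have "nonneg_mat ((1 / fact k) *\<^sub>R mat_pow B k)" for k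
    using nonneg_mat_pow[OF assms, of k] by (simp add: nonneg_mat_def)
  note nn = this
  have S: "(\<lambda>k. ((1 / fact k) *\<^sub>R mat_pow B k) $ i $ j) sums (mat_exp B $ i $ j)" for i j
  proof -
    have bl: "bounded_linear (\<lambda>M::real^'n^'n. M $ i $ j)"
      using bounded_linear_compose[OF bounded_linear_vec_nth bounded_linear_vec_nth] by blast
    show ?thesis by (rule bounded_linear.sums[OF bl mat_exp_sums'])
  qed
  show ?thesis unfolding nonneg_mat_def
  proof (intro allI)
    fix i j
    show "0 \<le> mat_exp B $ i $ j"
      by (rule sums_le[OF _ sums_zero S]) (use nn in \<open>simp add: nonneg_mat_def\<close>)
  qed
qed


lemma metzler_exp:
  fixes A :: "real^'n::finite^'n"
  assumes "metzler A" "0 \<le> t"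
  shows "nonneg_mat (mat_exp (t *\<^sub>R A))"
proof -
  define c where "c = (\<Sum>i\<in>UNIV. \<bar>A$i$i\<bar>)"
  define B where "B = A + c *\<^sub>R mat 1"
  have cge: "\<bar>A$i$i\<bar> \<le> c" for i
    unfolding c_def by (rule member_le_sum[where f="\<lambda>i. \<bar>A$i$i\<bar>"]) auto
  have Bnn: "nonneg_mat B"
    unfolding nonneg_mat_def B_def
  proof (intro allI)
    fix i j
    show "0 \<le> (A + c *\<^sub>R mat 1) $ i $ j"
    proof (cases "i = j")
      case True then show ?thesis using cge[of i] by (simp add: mat_def)
    next
      case False then show ?thesis using assms(1) by (simp add: mat_def metzler_def)
    qed
  qed
  have tBnn: "nonneg_mat (t *\<^sub>R B)" using Bnn assms(2) by (simp add: nonneg_mat_def)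
  let ?b = "abs_sqm (t *\<^sub>R B)" and ?r = "- (t * c)"
  have ab: "abs_sqm (t *\<^sub>R A) = ?b + ?r *\<^sub>R 1"
    apply (rule rep_inject[THEN iffD1])
    by (simp add: plus_sqm.rep_eq minus_sqm.rep_eq uminus_sqm.rep_eq scaleR_sqm.rep_eq one_sqm.rep_eq abs_sqm_inverse B_def algebra_simps)
  have comm: "?b * (?r *\<^sub>R 1) = (?r *\<^sub>R 1) * ?b" by simp
  have e1: "exp (?r *\<^sub>R (1::'n sqm)) = exp ?r *\<^sub>R 1"
    using exp_of_real[of ?r, where 'a="'n sqm"] by (simp add: of_real_def)
  have "exp (abs_sqm (t *\<^sub>R A)) = exp ?r *\<^sub>R exp ?b"
    unfolding ab exp_add_commuting[OF comm] e1 by simp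
  then have "mat_exp (t *\<^sub>R A) = exp ?r *\<^sub>R mat_exp (t *\<^sub>R B)"
    by (simp add: mat_exp_rep scaleR_sqm.rep_eq)
  then show ?thesis using nonneg_mat_exp[OF tBnn] by (simp add: nonneg_mat_def)
qed


lemma mat_exp_0: "mat_exp (0::real^'n::finite^'n) = mat 1"
  using mat_exp_zero[of "0::real^'n^'n"] by simp

lemma linear_vm: "linear (\<lambda>M::real^'n::finite^'m::finite. (v::real^'m) v* M)"
  by (rule linearI) (simp_all add: vector_matrix_mult_def vec_eq_iff sum_distrib_left mult_ac distrib_left sum.distrib)

lemma linear_vm2: "linear (\<lambda>v::real^'m::finite. v v* (M::real^'n::finite^'m))"
  by (rule linearI) (simp_all add: vector_matrix_left_distrib, simp add: vector_matrix_mult_def vec_eq_iff sum_distrib_left mult_ac)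

lemma bl_vm: "bounded_linear (\<lambda>M::real^'n::finite^'m::finite. (v::real^'m) v* M)"
  using linear_vm linear_conv_bounded_linear by blast

lemma bb_vm: "bounded_bilinear (\<lambda>(v::real^'m::finite) (M::real^'n::finite^'m). v v* M)"
  unfolding bilinear_conv_bounded_bilinear[symmetric] bilinear_def
  using linear_vm linear_vm2 by blast

lemma compare:
  fixes A :: "real^'n::finite^'n" and \<zeta> \<zeta>' :: "real \<Rightarrow> real^'n"
  assumes mz: "metzler A" and th: "0 \<le> \<theta>" "\<theta> \<le> T"
    and deriv: "\<forall>\<tau>\<in>{0..T}. (\<zeta> has_vector_derivative \<zeta>' \<tau>) (at \<tau> within {0..T})"
    and ineq: "\<forall>\<tau>\<in>{0..T}. \<forall>i. (\<zeta> \<tau> v* A - \<zeta>' \<tau>) $ i \<le> 0"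
  shows "(\<zeta> 0 v* mat_exp (\<theta> *\<^sub>R A)) $ j \<le> \<zeta> \<theta> $ j"
proof -
  define E where "E s = mat_exp ((\<theta> - s) *\<^sub>R A)" for s
  define w where "w s = \<zeta> s v* E s" for s
  define D where "D s = (\<zeta>' s - \<zeta> s v* A) v* E s" for s
  have wd: "(w has_vector_derivative D s) (at s within {0..\<theta>})" if s: "s \<in> {0..\<theta>}" for s
  proof -
    have zd: "(\<zeta> has_vector_derivative \<zeta>' s) (at s within {0..\<theta>})"
    proof -
      have "s \<in> {0..T}" using s th by auto
      then show ?thesis using deriv has_vector_derivative_within_subset[of \<zeta> "\<zeta>' s" s "{0..T}" "{0..\<theta>}"] th by auto
    qed
    have fd: "((\<lambda>s. \<theta> - s) has_vector_derivative (-1)) (at s within {0..\<theta>})"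
      using has_vector_derivative_diff[OF has_vector_derivative_const has_vector_derivative_id] by simp
    have "(((\<lambda>t. mat_exp (t *\<^sub>R A)) \<circ> (\<lambda>s. \<theta> - s)) has_vector_derivative
            (-1) *\<^sub>R (A ** mat_exp ((\<theta> - s) *\<^sub>R A))) (at s within {0..\<theta>})"
      by (rule vector_diff_chain_within[OF fd mat_exp_deriv_left])
    then have Ed: "(E has_vector_derivative (-1) *\<^sub>R (A ** E s)) (at s within {0..\<theta>})"
      by (simp add: E_def[abs_def] o_def)
    have "(w has_vector_derivative (\<zeta> s v* ((-1) *\<^sub>R (A ** E s)) + \<zeta>' s v* E s)) (at s within {0..\<theta>})"
      unfolding w_def by (rule bounded_bilinear.has_vector_derivative[OF bb_vm zd Ed])
    moreover have "\<zeta> s v* ((-1) *\<^sub>R (A ** E s)) + \<zeta>' s v* E s = D s"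
    proof -
      have "\<zeta> s v* ((-1) *\<^sub>R (A ** E s)) = - (\<zeta> s v* (A ** E s))"
        by (simp add: vector_matrix_mult_def vec_eq_iff sum_negf)
      then show ?thesis
        by (simp add: D_def vector_matrix_mul_assoc[symmetric] vector_matrix_mult_diff_distrib)
    qed
    ultimately show ?thesis by simp
  qed
  have wjd: "((\<lambda>s. w s $ j) has_real_derivative D s $ j) (at s within {0..\<theta>})" if "s \<in> {0..\<theta>}" for s
    using bounded_linear.has_vector_derivative[OF bounded_linear_vec_nth wd[OF that]]
    by (simp add: has_real_derivative_iff_has_vector_derivative)
  have Dnn: "D s $ j \<ge> 0" if "s \<in> {0..\<theta>}" for s
  proof -
    have En: "nonneg_mat (E s)" unfolding E_def using metzler_exp[OF mz] that by simp
    have "\<forall>i. (\<zeta>' s - \<zeta> s v* A) $ i \<ge> 0" using ineq that th by force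
    then show ?thesis using En unfolding D_def vector_matrix_mult_def nonneg_mat_def
      by (auto intro!: sum_nonneg)
  qed
  have "w 0 $ j \<le> w \<theta> $ j"
  proof (rule DERIV_nonneg_imp_increasing_open[OF th(1)])
    fix x assume x: "0 < x" "x < \<theta>"
    then have "((\<lambda>s. w s $ j) has_real_derivative D x $ j) (at x)"
      using wjd[of x] at_within_Icc_at[OF x] by simp
    then show "\<exists>y. ((\<lambda>s. w s $ j) has_real_derivative y) (at x) \<and> 0 \<le> y"
      using Dnn[of x] x by auto
  next
    show "continuous_on {0..\<theta>} (\<lambda>s. w s $ j)" by (rule DERIV_continuous_on[OF wjd])
  qed
  then show ?thesis by (simp add: w_def E_def mat_exp_0)
qed


lemma a_imp_b:
  fixes A J :: "real^'n::finite^'n" and lam mu :: "real^'n"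
  assumes "pos_vec lam" "pos_vec mu"
    and H: "\<forall>x. nonneg_vec x \<longrightarrow> (\<forall>\<theta>\<in>{Tmin..Tmax}.
               lam \<bullet> (mat_exp (\<theta> *\<^sub>R A) *v (J *v x)) - lam \<bullet> x \<le> - (mu \<bullet> x))"
  shows "\<forall>\<theta>\<in>{Tmin..Tmax}. \<forall>i. (lam v* (mat_exp (\<theta> *\<^sub>R A) ** J - mat 1)) $ i < 0"
proof (intro ballI allI)
  fix \<theta> and i :: 'n assume th: "\<theta> \<in> {Tmin..Tmax}"
  let ?M = "mat_exp (\<theta> *\<^sub>R A) ** J"
  have nx: "nonneg_vec (axis i (1::real))" by (simp add: nonneg_vec_def axis_def)
  have "lam \<bullet> (mat_exp (\<theta> *\<^sub>R A) *v (J *v axis i 1)) - lam \<bullet> axis i 1 \<le> - (mu \<bullet> axis i 1)"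
    using H nx th by blast
  moreover have "lam \<bullet> (mat_exp (\<theta> *\<^sub>R A) *v (J *v axis i 1)) = (lam v* ?M) $ i"
    by (simp add: matrix_vector_mul_assoc dot_lmul_matrix[symmetric] inner_axis)
  ultimately have "(lam v* ?M) $ i - lam $ i \<le> - mu $ i" by (simp add: inner_axis)
  moreover have "mu $ i > 0" using assms(2) by (simp add: pos_vec_def)
  ultimately show "(lam v* (?M - mat 1)) $ i < 0"
    by (simp add: vector_matrix_mult_diff_rdistrib)
qed

lemma c_imp_a:
  fixes A J :: "real^'n::finite^'n" and \<zeta> \<zeta>' :: "real \<Rightarrow> real^'n"
  assumes mz: "metzler A" and Jn: "nonneg_mat J" and T: "0 < Tmin" "Tmin \<le> Tmax"
    and ep: "\<epsilon> > 0" and z0: "pos_vec (\<zeta> 0)"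
    and deriv: "\<forall>\<tau>\<in>{0..Tmax}. (\<zeta> has_vector_derivative \<zeta>' \<tau>) (at \<tau> within {0..Tmax})"
    and ineq: "\<forall>\<tau>\<in>{0..Tmax}. \<forall>i. (\<zeta> \<tau> v* A - \<zeta>' \<tau>) $ i \<le> 0"
    and jump: "\<forall>\<theta>\<in>{Tmin..Tmax}. \<forall>i. (\<zeta> \<theta> v* J - \<zeta> 0 + \<epsilon> *\<^sub>R (\<chi> j. 1)) $ i \<le> 0"
  shows "\<exists>lam mu :: real ^'n. pos_vec lam \<and> pos_vec mu \<and>
            (\<forall>x. nonneg_vec x \<longrightarrow> (\<forall>\<theta>\<in>{Tmin..Tmax}.
               lam \<bullet> (mat_exp (\<theta> *\<^sub>R A) *v (J *v x)) - lam \<bullet> x \<le> - (mu \<bullet> x)))"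
proof (intro exI conjI allI impI ballI)
  let ?lam = "\<zeta> 0" and ?mu = "\<epsilon> *\<^sub>R (\<chi> j. 1) :: real^'n"
  show "pos_vec ?lam" by (rule z0)
  show "pos_vec ?mu" using ep by (simp add: pos_vec_def)
  fix x :: "real^'n" and \<theta> assume x: "nonneg_vec x" and th: "\<theta> \<in> {Tmin..Tmax}"
  let ?E = "mat_exp (\<theta> *\<^sub>R A)"
  have K: "(?lam v* ?E) $ j \<le> \<zeta> \<theta> $ j" for j
    using compare[OF mz _ _ deriv ineq] th T by auto
  have C: "(\<zeta> \<theta> v* J) $ j \<le> ?lam $ j - \<epsilon>" for j
  proof -
    have "(\<zeta> \<theta> v* J - \<zeta> 0 + \<epsilon> *\<^sub>R (\<chi> j. 1)) $ j \<le> 0" using jump th by blast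
    then show ?thesis by simp
  qed
  have M: "(?lam v* (?E ** J)) $ j \<le> ?lam $ j - \<epsilon>" for j
  proof -
    have "(?lam v* (?E ** J)) $ j = (\<Sum>i\<in>UNIV. (?lam v* ?E) $ i * J $ i $ j)"
    proof -
      have "?lam v* (?E ** J) = (?lam v* ?E) v* J" by (simp add: vector_matrix_mul_assoc)
      then show ?thesis by (simp add: vector_matrix_mult_def[of "?lam v* ?E"])
    qed
    also have "\<dots> \<le> (\<Sum>i\<in>UNIV. \<zeta> \<theta> $ i * J $ i $ j)"
      using K Jn by (auto intro!: sum_mono mult_right_mono simp: nonneg_mat_def)
    also have "\<dots> = (\<zeta> \<theta> v* J) $ j" by (simp add: vector_matrix_mult_def)
    finally show ?thesis using C[of j] by linarith
  qed
  have "?lam \<bullet> (?E *v (J *v x)) = (?lam v* (?E ** J)) \<bullet> x"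
    by (simp add: matrix_vector_mul_assoc dot_lmul_matrix)
  also have "\<dots> = (\<Sum>j\<in>UNIV. (?lam v* (?E ** J)) $ j * x $ j)" by (simp add: inner_vec_def)
  also have "\<dots> \<le> (\<Sum>j\<in>UNIV. (?lam $ j - \<epsilon>) * x $ j)"
    using M x by (auto intro!: sum_mono mult_right_mono simp: nonneg_vec_def)
  also have "\<dots> = ?lam \<bullet> x - ?mu \<bullet> x"
    by (simp add: inner_vec_def left_diff_distrib sum_subtractf sum_distrib_left)
  finally show "?lam \<bullet> (?E *v (J *v x)) - ?lam \<bullet> x \<le> - (?mu \<bullet> x)" by simp
qed


lemma b_imp_c:
  fixes A J :: "real^'n::finite^'n" and lam :: "real^'n"
  assumes T: "0 < Tmin" "Tmin \<le> Tmax" and lp: "pos_vec lam"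
    and H: "\<forall>\<theta>\<in>{Tmin..Tmax}. \<forall>i. (lam v* (mat_exp (\<theta> *\<^sub>R A) ** J - mat 1)) $ i < 0"
  shows "\<exists>(\<zeta> :: real \<Rightarrow> real ^'n) \<zeta>' (\<epsilon>::real). \<epsilon> > 0 \<and> pos_vec (\<zeta> 0) \<and>
            (\<forall>\<tau>\<in>{0..Tmax}. (\<zeta> has_vector_derivative \<zeta>' \<tau>) (at \<tau> within {0..Tmax})) \<and>
            (\<forall>\<tau>\<in>{0..Tmax}. \<forall>i. (\<zeta> \<tau> v* A - \<zeta>' \<tau>) $ i \<le> 0) \<and>
            (\<forall>\<theta>\<in>{Tmin..Tmax}. \<forall>i. (\<zeta> \<theta> v* J - \<zeta> 0 + \<epsilon> *\<^sub>R (\<chi> j. 1)) $ i \<le> 0)"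
proof -
  define L where "L i M = (lam v* (M ** J)) $ i" for i and M :: "real^'n^'n"
  define g where "g i \<theta> = L i (mat_exp (\<theta> *\<^sub>R A))" for i \<theta>
  have linL: "linear (L i)" for i
    by (rule linearI)
      (simp_all add: L_def matrix_add_rdistrib' vector_matrix_mult_add_rdistrib,
       simp add: vector_matrix_mult_def matrix_matrix_mult_def sum_distrib_left mult_ac)
  have blL: "bounded_linear (L i)" for i using linL linear_conv_bounded_linear by blast
  have gd: "((g i) has_real_derivative L i (mat_exp (\<theta> *\<^sub>R A) ** A)) (at \<theta> within S)" for i \<theta> S
    using bounded_linear.has_vector_derivative[OF blL mat_exp_deriv_right, of i]
    by (simp add: g_def[abs_def] has_real_derivative_iff_has_vector_derivative)
  let ?S = "{Tmin..Tmax}"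
  have "\<exists>m\<in>?S. \<forall>\<theta>\<in>?S. g i \<theta> \<le> g i m" for i
    by (rule continuous_attains_sup) (use T in \<open>auto intro: DERIV_continuous_on[OF gd]\<close>)
  then obtain m where m: "\<And>i. m i \<in> ?S" "\<And>i \<theta>. \<theta> \<in> ?S \<Longrightarrow> g i \<theta> \<le> g i (m i)"
    by metis
  have neg: "g i \<theta> - lam $ i < 0" if "\<theta> \<in> ?S" for i \<theta>
    using H that by (simp add: g_def L_def vector_matrix_mult_diff_rdistrib)
  define \<epsilon> where "\<epsilon> = Min (range (\<lambda>i. lam $ i - g i (m i)))"
  have ep: "\<epsilon> > 0" unfolding \<epsilon>_def using neg[OF m(1)] by (simp add: Min_gr_iff)
  have epl: "\<epsilon> \<le> lam $ i - g i (m i)" for i unfolding \<epsilon>_def by (rule Min_le) auto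
  show ?thesis
  proof (intro exI conjI ballI allI)
    show "\<epsilon> > 0" by (rule ep)
    show "pos_vec ((\<lambda>\<tau>. lam v* mat_exp (\<tau> *\<^sub>R A)) 0)" using lp by (simp add: mat_exp_0)
    fix \<tau> assume "\<tau> \<in> {0..Tmax}"
    show "((\<lambda>\<tau>. lam v* mat_exp (\<tau> *\<^sub>R A)) has_vector_derivative
           (\<lambda>\<tau>. lam v* (mat_exp (\<tau> *\<^sub>R A) ** A)) \<tau>) (at \<tau> within {0..Tmax})"
      using bounded_linear.has_vector_derivative[OF bl_vm[of lam] mat_exp_deriv_right[where A=A and t=\<tau> and S="{0..Tmax}"]] by simp
  next
    fix \<tau> :: real and i :: 'n
    show "((\<lambda>\<tau>. lam v* mat_exp (\<tau> *\<^sub>R A)) \<tau> v* A - (\<lambda>\<tau>. lam v* (mat_exp (\<tau> *\<^sub>R A) ** A)) \<tau>) $ i \<le> 0"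
      by (simp add: vector_matrix_mul_assoc)
  next
    fix \<theta> :: real and i :: 'n assume th: "\<theta> \<in> ?S"
    have "(lam v* mat_exp (\<theta> *\<^sub>R A) v* J) $ i = g i \<theta>"
      by (simp add: g_def L_def vector_matrix_mul_assoc)
    then show "((\<lambda>\<tau>. lam v* mat_exp (\<tau> *\<^sub>R A)) \<theta> v* J - (\<lambda>\<tau>. lam v* mat_exp (\<tau> *\<^sub>R A)) 0
          + \<epsilon> *\<^sub>R (\<chi> j. 1)) $ i \<le> 0"
      using m(2)[OF th, of i] epl[of i] by (simp add: mat_exp_0)
  qed
qed


theorem theorem5:
  fixes A J :: "real ^'n^'n" and Tmin Tmax :: real
  assumes "metzler A" and "nonneg_mat J"
    and "0 < Tmin" and "Tmin \<le> Tmax"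
  shows "((\<exists>lam mu :: real ^'n. pos_vec lam \<and> pos_vec mu \<and>
            (\<forall>x. nonneg_vec x \<longrightarrow> (\<forall>\<theta>\<in>{Tmin..Tmax}.
               lam \<bullet> (mat_exp (\<theta> *\<^sub>R A) *v (J *v x)) - lam \<bullet> x \<le> - (mu \<bullet> x))))
      \<longleftrightarrow>
         (\<exists>lam :: real ^'n. pos_vec lam \<and>
            (\<forall>\<theta>\<in>{Tmin..Tmax}. \<forall>i. (lam v* (mat_exp (\<theta> *\<^sub>R A) ** J - mat 1)) $ i < 0)))
    \<and> ((\<exists>lam :: real ^'n. pos_vec lam \<and>
            (\<forall>\<theta>\<in>{Tmin..Tmax}. \<forall>i. (lam v* (mat_exp (\<theta> *\<^sub>R A) ** J - mat 1)) $ i < 0))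
      \<longleftrightarrow>
         (\<exists>(\<zeta> :: real \<Rightarrow> real ^'n) \<zeta>' (\<epsilon>::real). \<epsilon> > 0 \<and> pos_vec (\<zeta> 0) \<and>
            (\<forall>\<tau>\<in>{0..Tmax}. (\<zeta> has_vector_derivative \<zeta>' \<tau>) (at \<tau> within {0..Tmax})) \<and>
            (\<forall>\<tau>\<in>{0..Tmax}. \<forall>i. (\<zeta> \<tau> v* A - \<zeta>' \<tau>) $ i \<le> 0) \<and>
            (\<forall>\<theta>\<in>{Tmin..Tmax}. \<forall>i. (\<zeta> \<theta> v* J - \<zeta> 0 + \<epsilon> *\<^sub>R (\<chi> j. 1)) $ i \<le> 0)))"
  proof -
  let ?a = "\<exists>lam mu :: real ^'n. pos_vec lam \<and> pos_vec mu \<and>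
            (\<forall>x. nonneg_vec x \<longrightarrow> (\<forall>\<theta>\<in>{Tmin..Tmax}.
               lam \<bullet> (mat_exp (\<theta> *\<^sub>R A) *v (J *v x)) - lam \<bullet> x \<le> - (mu \<bullet> x)))"
  let ?b = "\<exists>lam :: real ^'n. pos_vec lam \<and>
            (\<forall>\<theta>\<in>{Tmin..Tmax}. \<forall>i. (lam v* (mat_exp (\<theta> *\<^sub>R A) ** J - mat 1)) $ i < 0)"
  let ?c = "\<exists>(\<zeta> :: real \<Rightarrow> real ^'n) \<zeta>' (\<epsilon>::real). \<epsilon> > 0 \<and> pos_vec (\<zeta> 0) \<and>
            (\<forall>\<tau>\<in>{0..Tmax}. (\<zeta> has_vector_derivative \<zeta>' \<tau>) (at \<tau> within {0..Tmax})) \<and>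
            (\<forall>\<tau>\<in>{0..Tmax}. \<forall>i. (\<zeta> \<tau> v* A - \<zeta>' \<tau>) $ i \<le> 0) \<and>
            (\<forall>\<theta>\<in>{Tmin..Tmax}. \<forall>i. (\<zeta> \<theta> v* J - \<zeta> 0 + \<epsilon> *\<^sub>R (\<chi> j. 1)) $ i \<le> 0)"
  have ab: "?a \<Longrightarrow> ?b" using a_imp_b by blast
  have bc: "?b \<Longrightarrow> ?c" using b_imp_c[OF assms(3,4)] by blast
  have ca: "?c \<Longrightarrow> ?a"
  proof -
    assume ?c
    then obtain \<zeta> \<zeta>' \<epsilon> where h: "\<epsilon> > 0" "pos_vec (\<zeta> 0)"
      "\<forall>\<tau>\<in>{0..Tmax}. (\<zeta> has_vector_derivative \<zeta>' \<tau>) (at \<tau> within {0..Tmax})"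
      "\<forall>\<tau>\<in>{0..Tmax}. \<forall>i. (\<zeta> \<tau> v* A - \<zeta>' \<tau>) $ i \<le> 0"
      "\<forall>\<theta>\<in>{Tmin..Tmax}. \<forall>i. (\<zeta> \<theta> v* J - \<zeta> 0 + \<epsilon> *\<^sub>R (\<chi> j. 1)) $ i \<le> 0"
      by blast
    show ?a by (rule c_imp_a[OF assms h])
  qed
  show ?thesis using ab bc ca by blast
qed

end
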